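(* For all $0<p,q,r\le\infty$ and $\beta\in\mathbb{R}$, the space $X=T^{p,r}_{q,\beta}$ has the Fatou property: if $0\le f_k\in X$ for $k\in\mathbb{N}$, $\sup_k\|f_k\|_X<\infty$, and $f_k\uparrow f$ a.e. for a measurable $f$, then $f\in X$ and $\|f\|_X=\lim_{k\to\infty}\|f_k\|_X$.
   Context: Let $\mathbb{R}^{n+1}_+=\mathbb{R}^n\times(0,\infty)$; functions are complex-valued measurable, identified a.e. $B(y,t)=\{z:|z-y|<t\}$, $\Gamma(x)=\{(y,t):|y-x|<t\}$, $\widehat{B}=\{(y,t):B(y,t)\subset B\}$ for an open ball $B\subset\mathbb{R}^n$. Fix Whitney parameters $0<\alpha_1<\alpha_2^{-1}<1$, $W(y,t)=\{(z,s):|z-y|<\alpha_1t,\ \alpha_2^{-1}t<s<\alpha_2t\}$, $\mathcal{W}_r(f)(y,t)=|W(y,t)|^{-1/r}\|f\|_{L^r(W(y,t))}$ ($r<\infty$), $\mathcal{W}_\infty(f)(y,t)=\operatorname{ess\,sup}_{W(y,t)}|f|$. Tent spaces $T^p_q$: (A) $p,q<\infty$: $\|g\|=\|(\iint_{\Gamma(x)}|g|^q\,dy\,dt/t^{n+1})^{1/q}\|_{L^p(dx)}$; (B) $q<p=\infty$: $\|g\|=\sup_x\sup_{B\ni x}|B|^{-1/q}(\iint_{\widehat B}|g|^q\,dy\,dt/t)^{1/q}$; (C) $p<q=\infty$: $\|g\|=\|\sup_{(y,t)\in\Gamma(x)}|g(y,t)|\|_{L^p(dx)}$; (D) $T^\infty_\infty=L^\infty$.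 $T^{p,r}_{q,\beta}$ is the space of $f$ with $\|f\|_{T^{p,r}_{q,\beta}}=\|\mathcal{W}_r(f(z,s)s^{-\beta})\|_{T^p_q}<\infty$. *)

theory Defs
  imports "HOL-Analysis.Analysis"
begin

definition epow :: "ennreal \<Rightarrow> real \<Rightarrow> ennreal" where
  "epow x a =
     (if a = 0 then 1
      else if x = \<infinity> then (if a > 0 then \<infinity> else 0)
      else if x = 0 then (if a > 0 then 0 else \<infinity>)
      else ennreal (enn2real x powr a))"

definition upper_half :: "('a::euclidean_space \<times> real) set" where
  "upper_half = {z. 0 < snd z}"

definition cone :: "'a::euclidean_space \<Rightarrow> ('a \<times> real) set" where
  "cone x = {(y, t). 0 < t \<and> dist y x < t}"

definition tent :: "'a::euclidean_space \<Rightarrow> real \<Rightarrow> ('a \<times> real) set" where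
  "tent c \<rho> = {(y, t). 0 < t \<and> ball y t \<subseteq> ball c \<rho>}"

definition whitney :: "real \<Rightarrow> real \<Rightarrow> 'a::euclidean_space \<times> real \<Rightarrow> ('a \<times> real) set" where
  "whitney \<alpha>1 \<alpha>2 w = (case w of (y, t) \<Rightarrow>
     {(z, s). dist z y < \<alpha>1 * t \<and> t / \<alpha>2 < s \<and> s < \<alpha>2 * t})"

definition esssup_on :: "('a::euclidean_space) set \<Rightarrow> ('a \<Rightarrow> ennreal) \<Rightarrow> ennreal" where
  "esssup_on S g = Inf {c. AE z in lebesgue. z \<in> S \<longrightarrow> g z \<le> c}"

definition whitney_avg ::
  "real \<Rightarrow> real \<Rightarrow> ennreal \<Rightarrow> ('a::euclidean_space \<times> real \<Rightarrow> ennreal) \<Rightarrow> 'a \<times> real \<Rightarrow> ennreal" where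
  "whitney_avg \<alpha>1 \<alpha>2 r g w =
     (if r = \<infinity> then esssup_on (whitney \<alpha>1 \<alpha>2 w) g
      else epow (emeasure lebesgue (whitney \<alpha>1 \<alpha>2 w)) (- 1 / enn2real r)
         * epow (\<integral>\<^sup>+ z. indicator (whitney \<alpha>1 \<alpha>2 w) z * epow (g z) (enn2real r) \<partial>lebesgue)
                (1 / enn2real r))"

definition tent_norm :: "ennreal \<Rightarrow> ennreal \<Rightarrow> ('a::euclidean_space \<times> real \<Rightarrow> ennreal) \<Rightarrow> ennreal" where
  "tent_norm p q g =
     (if p \<noteq> \<infinity> \<and> q \<noteq> \<infinity> then
        epow (\<integral>\<^sup>+ x. epow (\<integral>\<^sup>+ z. indicator (cone x) z * epow (g z) (enn2real q)
                 * ennreal (1 / snd z ^ (DIM('a) + 1)) \<partial>lebesgue) (enn2real p / enn2real q) \<partial>lebesgue)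
             (1 / enn2real p)
      else if p = \<infinity> \<and> q \<noteq> \<infinity> then
        (SUP x. SUP c. SUP \<rho> \<in> {\<rho>. 0 < \<rho> \<and> x \<in> ball c \<rho>}.
           epow (emeasure lebesgue (ball c \<rho>)) (- 1 / enn2real q)
           * epow (\<integral>\<^sup>+ z. indicator (tent c \<rho>) z * epow (g z) (enn2real q)
                    * ennreal (1 / snd z) \<partial>lebesgue) (1 / enn2real q))
      else if p \<noteq> \<infinity> \<and> q = \<infinity> then
        epow (\<integral>\<^sup>+ x. epow (SUP z \<in> cone x. g z) (enn2real p) \<partial>lebesgue) (1 / enn2real p)
      else esssup_on upper_half g)"

definition tpr_norm ::
  "real \<Rightarrow> real \<Rightarrow> ennreal \<Rightarrow> ennreal \<Rightarrow> ennreal \<Rightarrow> real \<Rightarrow> ('a::euclidean_space \<times> real \<Rightarrow> complex) \<Rightarrow> ennreal" where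
  "tpr_norm \<alpha>1 \<alpha>2 p q r \<beta> f =
     tent_norm p q (whitney_avg \<alpha>1 \<alpha>2 r (\<lambda>(z, s). ennreal (cmod (f (z, s)) * s powr (- \<beta>))))"

definition tpr_space ::
  "real \<Rightarrow> real \<Rightarrow> ennreal \<Rightarrow> ennreal \<Rightarrow> ennreal \<Rightarrow> real \<Rightarrow> ('a::euclidean_space \<times> real \<Rightarrow> complex) set" where
  "tpr_space \<alpha>1 \<alpha>2 p q r \<beta> =
     {f. f \<in> borel_measurable lebesgue \<and> tpr_norm \<alpha>1 \<alpha>2 p q r \<beta> f < \<infinity>}"

end

theory Submission
  imports Defs
begin


lemma epow_pos_mono:
  assumes "0 < a" "x \<le> y" shows "epow x a \<le> epow y a"
proof -
  consider "y = \<infinity>" | "x = 0" | "x \<noteq> 0" "y \<noteq> \<infinity>" by blast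
  then show ?thesis
  proof cases
    case 1 then show ?thesis using assms by (simp add: epow_def)
  next
    case 2 then show ?thesis using assms by (auto simp: epow_def)
  next
    case 3
    then have "x \<noteq> \<infinity>" using assms top.extremum_unique by fastforce
    moreover have "y \<noteq> 0" using 3 assms by (metis bot.extremum_uniqueI bot_ennreal)
    moreover have "enn2real x \<le> enn2real y" using assms(2) 3 by (simp add: enn2real_mono top.not_eq_extremum)
    ultimately show ?thesis using 3 assms
      by (auto simp: epow_def intro!: ennreal_leI powr_mono2)
  qed
qed

lemma epow_inv:
  assumes "0 < a" shows "epow (epow x a) (1/a) = x"
proof -
  consider "x = \<infinity>" | "x = 0" | "x \<noteq> 0" "x \<noteq> \<infinity>" by blast
  then show ?thesis
  proof cases
    case 3
    then have p: "0 < enn2real x" by (simp add: enn2real_positive_iff top.not_eq_extremum zero_less_iff_neq_zero)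
    then show ?thesis using 3 assms
      by (auto simp: epow_def powr_powr enn2real_eq_0_iff ennreal_enn2real_if)
  qed (use assms in \<open>auto simp: epow_def\<close>)
qed

lemma mono_inv_Sup:
  fixes f :: "'a::complete_lattice \<Rightarrow> 'b::complete_lattice" and g :: "'b \<Rightarrow> 'a"
  assumes "mono f" "mono g" "\<And>x. g (f x) = x" "\<And>y. f (g y) = y"
  shows "f (Sup S) = Sup (f ` S)"
proof (rule antisym)
  show "Sup (f ` S) \<le> f (Sup S)" using assms(1) by (simp add: SUP_least Sup_upper monoD)
  have "Sup S \<le> g (Sup (f ` S))"
    by (metis Sup_least Sup_upper assms(2,3) image_eqI monoD)
  then show "f (Sup S) \<le> Sup (f ` S)" using assms by (metis monoD)
qed

lemma epow_SUP:
  assumes "0 < a" shows "epow (SUP i\<in>I. X i) a = (SUP i\<in>I. epow (X i) a)"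
proof -
  have "epow (Sup (X ` I)) a = Sup ((\<lambda>x. epow x a) ` (X ` I))"
  proof (rule mono_inv_Sup[where g="\<lambda>x. epow x (1/a)"])
    show "mono (\<lambda>x. epow x a)" using assms epow_pos_mono by (auto simp: mono_def)
    show "mono (\<lambda>x. epow x (1/a))" using assms epow_pos_mono by (auto simp: mono_def)
    show "epow (epow x a) (1/a) = x" for x using assms epow_inv by auto
    show "epow (epow y (1/a)) a = y" for y using epow_inv[of "1/a" y] assms by auto
  qed
  then show ?thesis by (simp add: image_comp)
qed

lemma epow_measurable[measurable]:
  assumes [measurable]: "F \<in> borel_measurable M"
  shows "(\<lambda>w. epow (F w) a) \<in> borel_measurable M"
  unfolding epow_def by measurable

lemma esssup_on_AE: "AE z in lebesgue. z \<in> S \<longrightarrow> g z \<le> esssup_on S g"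
proof -
  let ?C = "{c. AE z in lebesgue. z \<in> S \<longrightarrow> g z \<le> c}"
  have "top \<in> ?C" by simp
  then obtain u where u: "\<And>n. u n \<in> ?C" "u \<longlonglongrightarrow> Inf ?C"
    using Inf_as_limit[of ?C] by blast
  have "AE z in lebesgue. \<forall>n. z \<in> S \<longrightarrow> g z \<le> u n"
    using u(1) by (subst AE_all_countable) simp
  then show ?thesis unfolding esssup_on_def
  proof eventually_elim
    case (elim z)
    show ?case
    proof
      assume "z \<in> S"
      then show "g z \<le> Inf ?C" using elim by (intro LIMSEQ_le_const[OF u(2)]) auto
    qed
  qed
qed

lemma esssup_on_mono_AE:
  assumes "AE z in lebesgue. z \<in> S \<longrightarrow> h z \<le> g z"
  shows "esssup_on S h \<le> esssup_on S g"
  unfolding esssup_on_def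
proof (rule Inf_superset_mono, rule subsetI)
  fix c assume "c \<in> {c. AE z in lebesgue. z \<in> S \<longrightarrow> g z \<le> c}"
  then have "AE z in lebesgue. z \<in> S \<longrightarrow> g z \<le> c" by simp
  with assms have "AE z in lebesgue. z \<in> S \<longrightarrow> h z \<le> c"
    by eventually_elim (auto intro: order_trans)
  then show "c \<in> {c. AE z in lebesgue. z \<in> S \<longrightarrow> h z \<le> c}" by simp
qed

lemma esssup_on_SUP:
  fixes gk :: "nat \<Rightarrow> 'a::euclidean_space \<Rightarrow> ennreal"
  assumes "AE z in lebesgue. z \<in> S \<longrightarrow> g z = (SUP k. gk k z)"
  shows "esssup_on S g = (SUP k. esssup_on S (gk k))"
proof (rule antisym)
  let ?c = "SUP k. esssup_on S (gk k)"
  have "AE z in lebesgue. \<forall>k. z \<in> S \<longrightarrow> gk k z \<le> esssup_on S (gk k)"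
    by (subst AE_all_countable) (blast intro: esssup_on_AE)
  then have "AE z in lebesgue. z \<in> S \<longrightarrow> g z \<le> ?c"
    using assms
  proof eventually_elim
    case (elim z)
    then show ?case by (auto intro!: SUP_mono)
  qed
  then show "esssup_on S g \<le> ?c" unfolding esssup_on_def by (intro Inf_lower) simp
  show "?c \<le> esssup_on S g"
  proof (rule SUP_least, rule esssup_on_mono_AE)
    fix k show "AE z in lebesgue. z \<in> S \<longrightarrow> gk k z \<le> g z"
      using assms by eventually_elim (auto intro: SUP_upper)
  qed
qed

lemma whitney_eq: "whitney \<alpha>1 \<alpha>2 (y, t) = {(z, s). dist z y < \<alpha>1 * t \<and> t / \<alpha>2 < s \<and> s < \<alpha>2 * t}"
  by (simp add: whitney_def)

lemma open_whitney_joint: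
  "open {p :: ('a::euclidean_space \<times> real) \<times> ('a \<times> real). snd p \<in> whitney \<alpha>1 \<alpha>2 (fst p)}"
proof -
  have "{p :: ('a \<times> real) \<times> ('a \<times> real). snd p \<in> whitney \<alpha>1 \<alpha>2 (fst p)} =
    {p. dist (fst (snd p)) (fst (fst p)) < \<alpha>1 * snd (fst p)} \<inter>
    {p. snd (fst p) * (1 / \<alpha>2) < snd (snd p)} \<inter> {p. snd (snd p) < \<alpha>2 * snd (fst p)}"
    by (auto simp: whitney_def split: prod.splits)
  also have "open \<dots>"
    by (intro open_Int open_Collect_less continuous_intros)
  finally show ?thesis .
qed

lemma open_whitney: "open (whitney \<alpha>1 \<alpha>2 w)"
proof -
  obtain y t where w: "w = (y, t)" by force
  have "whitney \<alpha>1 \<alpha>2 w =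
    {p. dist (fst p) y < \<alpha>1 * t} \<inter> {p. t / \<alpha>2 < snd p} \<inter> {p. snd p < \<alpha>2 * t}"
    by (auto simp: whitney_def w)
  also have "open \<dots>"
    by (intro open_Int open_Collect_less continuous_intros)
  finally show ?thesis .
qed

lemma whitney_sets[measurable]: "whitney \<alpha>1 \<alpha>2 w \<in> sets lebesgue"
  using open_whitney by (metis borel_open sets_completionI_sets sets_lborel)

lemma whitney_upper:
  assumes "0 < \<alpha>1" "0 < \<alpha>2" shows "whitney \<alpha>1 \<alpha>2 w \<subseteq> upper_half"
proof
  fix z assume z: "z \<in> whitney \<alpha>1 \<alpha>2 w"
  obtain y t where w: "w = (y, t)" by force
  obtain a s where zz: "z = (a, s)" by force
  have "0 \<le> dist a y" by simp
  moreover have "dist a y < \<alpha>1 * t" using z by (simp add: whitney_def w zz)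
  ultimately have "0 < \<alpha>1 * t" by linarith
  then have "0 < t" using assms by (simp add: zero_less_mult_iff)
  then have "0 < t / \<alpha>2" using assms by simp
  then show "z \<in> upper_half" using z by (auto simp: whitney_def w zz upper_half_def)
qed

lemma whitney_avg_SUP:
  fixes gk :: "nat \<Rightarrow> 'a::euclidean_space \<times> real \<Rightarrow> ennreal"
  assumes a1: "0 < \<alpha>1" and a2: "0 < \<alpha>2" and r: "0 < r"
    and meas: "\<And>k. gk k \<in> borel_measurable lebesgue"
    and ae: "AE z in lebesgue. z \<in> upper_half \<longrightarrow>
               (\<forall>k. gk k z \<le> gk (Suc k) z) \<and> g z = (SUP k. gk k z)"
  shows "whitney_avg \<alpha>1 \<alpha>2 r g w = (SUP k. whitney_avg \<alpha>1 \<alpha>2 r (gk k) w)"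
proof (cases "r = \<infinity>")
  case True
  have "AE z in lebesgue. z \<in> whitney \<alpha>1 \<alpha>2 w \<longrightarrow> g z = (SUP k. gk k z)"
    using ae by eventually_elim (use whitney_upper[OF a1 a2, of w] in blast)
  then show ?thesis using True by (simp add: whitney_avg_def esssup_on_SUP)
next
  case False
  define \<rho> where "\<rho> = enn2real r"
  have \<rho>: "0 < \<rho>" using False r by (simp add: \<rho>_def enn2real_positive_iff top.not_eq_extremum)
  let ?W = "whitney \<alpha>1 \<alpha>2 w"
  have "(\<integral>\<^sup>+ z. indicator ?W z * epow (g z) \<rho> \<partial>lebesgue) =
        (\<integral>\<^sup>+ z. (SUP k. indicator ?W z * epow (gk k z) \<rho>) \<partial>lebesgue)"
  proof (rule nn_integral_cong_AE)
    show "AE z in lebesgue. indicator ?W z * epow (g z) \<rho> = (SUP k. indicator ?W z * epow (gk k z) \<rho>)"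
      using ae
    proof eventually_elim
      case (elim z)
      show ?case
      proof (cases "z \<in> ?W")
        case True
        then show ?thesis using elim whitney_upper[OF a1 a2, of w] by (auto simp: epow_SUP[OF \<rho>] image_comp)
      qed simp
    qed
  qed
  also have "\<dots> = (SUP k. \<integral>\<^sup>+ z. indicator ?W z * epow (gk k z) \<rho> \<partial>lebesgue)"
  proof (rule nn_integral_monotone_convergence_SUP_AE)
    fix k
    show "AE z in lebesgue. indicator ?W z * epow (gk k z) \<rho> \<le> indicator ?W z * epow (gk (Suc k) z) \<rho>"
      using ae
      by eventually_elim (use whitney_upper[OF a1 a2, of w] in \<open>auto intro!: mult_left_mono epow_pos_mono[OF \<rho>] simp: indicator_def\<close>)
    show "(\<lambda>z. indicator ?W z * epow (gk k z) \<rho>) \<in> borel_measurable lebesgue"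
      using meas[of k] by measurable
  qed
  finally have eq: "(\<integral>\<^sup>+ z. indicator ?W z * epow (g z) \<rho> \<partial>lebesgue) =
     (SUP k. \<integral>\<^sup>+ z. indicator ?W z * epow (gk k z) \<rho> \<partial>lebesgue)" .
  have "0 < 1 / \<rho>" using \<rho> by simp
  then show ?thesis using False
    by (simp add: whitney_avg_def \<rho>_def[symmetric] eq epow_SUP SUP_mult_left_ennreal image_comp)
qed

lemma whitney_int_measurable:
  fixes h :: "'a::euclidean_space \<times> real \<Rightarrow> ennreal"
  assumes h[measurable]: "h \<in> borel_measurable borel"
  shows "(\<lambda>w. \<integral>\<^sup>+ z. indicator (whitney \<alpha>1 \<alpha>2 w) z * h z \<partial>lebesgue) \<in> borel_measurable borel"
proof -
  let ?J = "{p :: ('a \<times> real) \<times> ('a \<times> real). snd p \<in> whitney \<alpha>1 \<alpha>2 (fst p)}"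
  have J: "?J \<in> sets borel" using open_whitney_joint by (rule borel_open)
  have sp: "sets (lborel \<Otimes>\<^sub>M lborel) = sets (borel :: (('a \<times> real) \<times> ('a \<times> real)) measure)"
    by (metis lborel_prod sets_lborel)
  have "(\<lambda>p. indicator ?J p * h (snd p)) \<in> borel_measurable (borel :: (('a \<times> real) \<times> ('a \<times> real)) measure)"
  proof -
    have "snd \<in> borel_measurable (borel :: (('a \<times> real) \<times> ('a \<times> real)) measure)"
      by (intro borel_measurable_continuous_onI continuous_intros)
    then have "(\<lambda>p. h (snd p)) \<in> borel_measurable (borel :: (('a \<times> real) \<times> ('a \<times> real)) measure)"
      using measurable_compose[OF _ h] by blast
    with J show ?thesis by measurable
  qed
  then have "(\<lambda>p. indicator ?J p * h (snd p)) \<in> borel_measurable (lborel \<Otimes>\<^sub>M lborel)"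
    by (subst measurable_cong_sets[OF sp refl])
  moreover have "(\<lambda>p. indicator ?J p * h (snd p)) = case_prod (\<lambda>w z. indicator (whitney \<alpha>1 \<alpha>2 w) z * h z)"
    by (auto simp: indicator_def fun_eq_iff)
  ultimately have "(\<lambda>w. \<integral>\<^sup>+ z. indicator (whitney \<alpha>1 \<alpha>2 w) z * h z \<partial>lborel) \<in> borel_measurable lborel"
    by (intro lborel.borel_measurable_nn_integral) simp
  then have "(\<lambda>w. \<integral>\<^sup>+ z. indicator (whitney \<alpha>1 \<alpha>2 w) z * h z \<partial>lborel) \<in> borel_measurable borel"
    by (simp add: measurable_cong_sets[OF sets_lborel refl])
  then show ?thesis by (simp add: nn_integral_completion)
qed



lemma esssup_on_less_iff:
  assumes g: "g \<in> borel_measurable lebesgue" and S: "S \<in> sets lebesgue"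
  shows "c < esssup_on S g \<longleftrightarrow>
    0 < (\<integral>\<^sup>+ z. indicator S z * indicator {z. c < g z} z \<partial>lebesgue)"
proof -
  have "c < esssup_on S g \<longleftrightarrow> \<not> (AE z in lebesgue. z \<in> S \<longrightarrow> g z \<le> c)"
  proof
    assume lt: "c < esssup_on S g"
    show "\<not> (AE z in lebesgue. z \<in> S \<longrightarrow> g z \<le> c)"
    proof
      assume "AE z in lebesgue. z \<in> S \<longrightarrow> g z \<le> c"
      then have "esssup_on S g \<le> c" unfolding esssup_on_def by (intro Inf_lower) simp
      with lt show False by simp
    qed
  next
    assume nae: "\<not> (AE z in lebesgue. z \<in> S \<longrightarrow> g z \<le> c)"
    show "c < esssup_on S g"
    proof (rule ccontr)
      assume "\<not> c < esssup_on S g"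
      then have le: "esssup_on S g \<le> c" by simp
      have "AE z in lebesgue. z \<in> S \<longrightarrow> g z \<le> c"
        using esssup_on_AE[of S g] by eventually_elim (use le in \<open>auto intro: order_trans\<close>)
      with nae show False by simp
    qed
  qed
  also have "\<dots> \<longleftrightarrow> \<not> (AE z in lebesgue. indicator S z * indicator {z. c < g z} z = (0::ennreal))"
    by (intro arg_cong[where f=Not] AE_cong) (auto simp: indicator_def not_less)
  also have "\<dots> \<longleftrightarrow> (\<integral>\<^sup>+ z. indicator S z * indicator {z. c < g z} z \<partial>lebesgue) \<noteq> 0"
    by (subst nn_integral_0_iff_AE) (use g S in measurable)
  finally show ?thesis by (simp add: zero_less_iff_neq_zero)
qed

lemma whitney_avg_measurable_borel:
  fixes g :: "'a::euclidean_space \<times> real \<Rightarrow> ennreal"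
  assumes g[measurable]: "g \<in> borel_measurable borel"
  shows "whitney_avg \<alpha>1 \<alpha>2 r g \<in> borel_measurable borel"
proof (cases "r = \<infinity>")
  case True
  have gl: "g \<in> borel_measurable lebesgue"
    using g measurable_completion[of g lborel borel] by (simp only: measurable_lborel2)
  show ?thesis
  proof (rule borel_measurableI_greater)
    fix c
    have "(\<lambda>z. indicator {z. c < g z} z :: ennreal) \<in> borel_measurable borel" by measurable
    then have m: "(\<lambda>w. \<integral>\<^sup>+ z. indicator (whitney \<alpha>1 \<alpha>2 w) z * indicator {z. c < g z} z \<partial>lebesgue)
       \<in> borel_measurable borel" by (rule whitney_int_measurable)
    have "{w \<in> space borel. c < whitney_avg \<alpha>1 \<alpha>2 r g w} =
          {w \<in> space borel. 0 < (\<integral>\<^sup>+ z. indicator (whitney \<alpha>1 \<alpha>2 w) z * indicator {z. c < g z} z \<partial>lebesgue)}"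
      using True by (simp add: whitney_avg_def esssup_on_less_iff[OF gl whitney_sets])
    also have "\<dots> \<in> sets borel" using m by measurable
    finally show "{w \<in> space borel. c < whitney_avg \<alpha>1 \<alpha>2 r g w} \<in> sets borel" .
  qed
next
  case False
  have m1: "(\<lambda>w. \<integral>\<^sup>+ z. indicator (whitney \<alpha>1 \<alpha>2 w) z * epow (g z) (enn2real r) \<partial>lebesgue)
       \<in> borel_measurable borel" by (rule whitney_int_measurable) measurable
  have m2: "(\<lambda>w. \<integral>\<^sup>+ z. indicator (whitney \<alpha>1 \<alpha>2 w) z * 1 \<partial>lebesgue)
       \<in> borel_measurable borel" by (rule whitney_int_measurable) measurable
  have "(\<lambda>w. emeasure lebesgue (whitney \<alpha>1 \<alpha>2 w)) = (\<lambda>w. \<integral>\<^sup>+ z. indicator (whitney \<alpha>1 \<alpha>2 w) z * 1 \<partial>lebesgue)"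
    by (simp add: nn_integral_indicator)
  with m2 have m3: "(\<lambda>w. emeasure lebesgue (whitney \<alpha>1 \<alpha>2 w)) \<in> borel_measurable borel" by simp
  have "whitney_avg \<alpha>1 \<alpha>2 r g = (\<lambda>w. epow (emeasure lebesgue (whitney \<alpha>1 \<alpha>2 w)) (- 1 / enn2real r)
         * epow (\<integral>\<^sup>+ z. indicator (whitney \<alpha>1 \<alpha>2 w) z * epow (g z) (enn2real r) \<partial>lebesgue) (1 / enn2real r))"
    using False by (simp add: whitney_avg_def fun_eq_iff)
  also have "\<dots> \<in> borel_measurable borel" using m1 m3 by measurable
  finally show ?thesis .
qed


lemma whitney_avg_AE_cong:
  assumes "AE z in lebesgue. g z = h z"
  shows "whitney_avg \<alpha>1 \<alpha>2 r g = whitney_avg \<alpha>1 \<alpha>2 r h"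
proof -
  have e: "esssup_on S g = esssup_on S h" for S
    by (rule antisym; rule esssup_on_mono_AE) (use assms in \<open>auto elim: eventually_mono\<close>)
  have i: "(\<integral>\<^sup>+ z. indicator S z * epow (g z) a \<partial>lebesgue) = (\<integral>\<^sup>+ z. indicator S z * epow (h z) a \<partial>lebesgue)"
    for S a by (rule nn_integral_cong_AE) (use assms in \<open>auto elim: eventually_mono\<close>)
  show ?thesis by (simp add: whitney_avg_def e i fun_eq_iff)
qed

lemma whitney_avg_measurable:
  fixes g :: "'a::euclidean_space \<times> real \<Rightarrow> ennreal"
  assumes g: "g \<in> borel_measurable lebesgue"
  shows "whitney_avg \<alpha>1 \<alpha>2 r g \<in> borel_measurable borel"
proof -
  obtain g' where g': "g' \<in> borel_measurable lborel" "AE x in lborel. g x = g' x"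
    using completion_ex_borel_measurable[OF g] by blast
  have "whitney_avg \<alpha>1 \<alpha>2 r g = whitney_avg \<alpha>1 \<alpha>2 r g'"
    by (rule whitney_avg_AE_cong) (rule AE_completion[OF g'(2)])
  moreover have "g' \<in> borel_measurable borel"
    using g'(1) by (simp only: measurable_lborel2)
  ultimately show ?thesis by (simp add: whitney_avg_measurable_borel)
qed

lemma borel_to_lebesgue:
  fixes f :: "'a::euclidean_space \<Rightarrow> 'b::topological_space"
  shows "f \<in> borel_measurable borel \<Longrightarrow> f \<in> borel_measurable lebesgue"
  using measurable_completion[of f lborel borel] by (simp only: measurable_lborel2)

lemma borel_sets_lebesgue: "S \<in> sets borel \<Longrightarrow> S \<in> sets (lebesgue :: 'a::euclidean_space measure)"
  by (metis sets_completionI_sets sets_lborel)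

lemma int_SUP_helper:
  fixes G :: "nat \<Rightarrow> 'a::euclidean_space \<Rightarrow> ennreal"
  assumes inc: "incseq G" and G: "\<And>k. G k \<in> borel_measurable borel" and Q: "0 < Q"
    and S: "S \<in> sets borel" and wt: "wt \<in> borel_measurable borel"
  shows "(\<integral>\<^sup>+ z. indicator S z * epow (SUP k. G k z) Q * wt z \<partial>lebesgue) =
         (SUP k. \<integral>\<^sup>+ z. indicator S z * epow (G k z) Q * wt z \<partial>lebesgue)"
proof -
  have "(\<integral>\<^sup>+ z. indicator S z * epow (SUP k. G k z) Q * wt z \<partial>lebesgue) =
        (\<integral>\<^sup>+ z. (SUP k. indicator S z * epow (G k z) Q * wt z) \<partial>lebesgue)"
    by (simp add: epow_SUP[OF Q] SUP_mult_left_ennreal SUP_mult_right_ennreal image_comp)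
  also have "\<dots> = (SUP k. \<integral>\<^sup>+ z. indicator S z * epow (G k z) Q * wt z \<partial>lebesgue)"
  proof (rule nn_integral_monotone_convergence_SUP)
    show "incseq (\<lambda>k z. indicator S z * epow (G k z) Q * wt z)"
      using inc by (auto simp: incseq_def le_fun_def intro!: mult_right_mono mult_left_mono epow_pos_mono[OF Q])
    fix k
    have [measurable]: "G k \<in> borel_measurable lebesgue" "wt \<in> borel_measurable lebesgue"
      "S \<in> sets lebesgue"
      using G wt S by (auto intro: borel_to_lebesgue borel_sets_lebesgue)
    show "(\<lambda>z. indicator S z * epow (G k z) Q * wt z) \<in> borel_measurable lebesgue" by measurable
  qed
  finally show ?thesis .
qed

lemma slice_int_measurable:
  fixes h :: "'c::euclidean_space \<Rightarrow> ennreal" and J :: "('b::euclidean_space \<times> 'c) set"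
  assumes J: "J \<in> sets borel" and h: "h \<in> borel_measurable borel"
  shows "(\<lambda>x. \<integral>\<^sup>+ z. indicator J (x, z) * h z \<partial>lebesgue) \<in> borel_measurable borel"
proof -
  have sp: "sets (lborel \<Otimes>\<^sub>M lborel) = sets (borel :: ('b \<times> 'c) measure)"
    by (metis lborel_prod sets_lborel)
  have "(\<lambda>p. indicator J p * h (snd p)) \<in> borel_measurable (borel :: ('b \<times> 'c) measure)"
  proof -
    have "snd \<in> borel_measurable (borel :: ('b \<times> 'c) measure)"
      by (intro borel_measurable_continuous_onI continuous_intros)
    then have "(\<lambda>p. h (snd p)) \<in> borel_measurable (borel :: ('b \<times> 'c) measure)"
      using measurable_compose[OF _ h] by blast
    with J show ?thesis by measurable
  qed
  then have "(\<lambda>p. indicator J p * h (snd p)) \<in> borel_measurable (lborel \<Otimes>\<^sub>M lborel)"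
    by (subst measurable_cong_sets[OF sp refl])
  moreover have "(\<lambda>p. indicator J p * h (snd p)) = case_prod (\<lambda>x z. indicator J (x, z) * h z)"
    by (auto simp: fun_eq_iff)
  ultimately have "(\<lambda>x. \<integral>\<^sup>+ z. indicator J (x, z) * h z \<partial>lborel) \<in> borel_measurable lborel"
    by (intro lborel.borel_measurable_nn_integral) simp
  then show ?thesis by (simp add: nn_integral_completion)
qed

lemma tent_eq: "tent c \<rho> = {(y, t). 0 < t \<and> dist y c + t \<le> \<rho>}"
  by (auto simp: tent_def ball_subset_ball_iff)

lemma tent_borel: "tent c \<rho> \<in> sets borel"
proof -
  have "tent c \<rho> = {z. 0 < snd z} \<inter> {z. dist (fst z) c + snd z \<le> \<rho>}"
    by (auto simp: tent_eq)
  also have "\<dots> \<in> sets borel"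
    by (intro sets.Int borel_open borel_closed open_Collect_less closed_Collect_le continuous_intros)
  finally show ?thesis .
qed

lemma cone_joint_borel: "{p :: 'a::euclidean_space \<times> ('a \<times> real). snd p \<in> cone (fst p)} \<in> sets borel"
proof -
  have "{p :: 'a \<times> ('a \<times> real). snd p \<in> cone (fst p)} =
     {p. 0 < snd (snd p)} \<inter> {p. dist (fst (snd p)) (fst p) < snd (snd p)}"
    by (auto simp: cone_def split: prod.splits)
  also have "\<dots> \<in> sets borel"
    by (intro sets.Int borel_open open_Collect_less continuous_intros)
  finally show ?thesis .
qed

lemma cone_borel: "cone x \<in> sets borel"
proof -
  have "cone x = {p. 0 < snd p} \<inter> {p. dist (fst p) x < snd p}"
    by (auto simp: cone_def)
  also have "\<dots> \<in> sets borel"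
    by (intro sets.Int borel_open open_Collect_less continuous_intros)
  finally show ?thesis .
qed

lemma cone_sup_measurable:
  fixes H :: "'a::euclidean_space \<times> real \<Rightarrow> ennreal"
  shows "(\<lambda>x. SUP z\<in>cone x. H z) \<in> borel_measurable borel"
proof (rule borel_measurableI_greater)
  fix c
  have "{x \<in> space borel. c < (SUP z\<in>cone x. H z)} = (\<Union>z\<in>{z. c < H z}. {x. z \<in> cone x})"
    by (auto simp: less_SUP_iff)
  also have "open \<dots>"
  proof (intro open_UN ballI)
    fix z :: "'a \<times> real"
    obtain y t where z: "z = (y, t)" by force
    have "{x. z \<in> cone x} = (if 0 < t then ball y t else {})"
      by (auto simp: cone_def z dist_commute)
    then show "open {x. z \<in> cone x}" by simp
  qed
  finally show "{x \<in> space borel. c < (SUP z\<in>cone x. H z)} \<in> sets borel" by (rule borel_open)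
qed

lemma snd_borel[measurable]: "(snd :: 'a::euclidean_space \<times> real \<Rightarrow> real) \<in> borel_measurable borel"
  by (intro borel_measurable_continuous_onI continuous_intros)

lemma tent_norm_SUP:
  fixes G :: "nat \<Rightarrow> 'a::euclidean_space \<times> real \<Rightarrow> ennreal"
  assumes inc: "incseq G" and G: "\<And>k. G k \<in> borel_measurable borel" and p: "0 < p" and q: "0 < q"
  shows "tent_norm p q (\<lambda>z. SUP k. G k z) = (SUP k. tent_norm p q (G k))"
proof -
  have Gl[measurable]: "G k \<in> borel_measurable lebesgue" for k using G by (rule borel_to_lebesgue)
  have incp: "G k z \<le> G (Suc k) z" for k z using inc unfolding incseq_Suc_iff le_fun_def by blast
  consider (A) "p \<noteq> \<infinity>" "q \<noteq> \<infinity>" | (B) "p = \<infinity>" "q \<noteq> \<infinity>" | (C) "p \<noteq> \<infinity>" "q = \<infinity>"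
    | (D) "p = \<infinity>" "q = \<infinity>" by blast
  then show ?thesis
  proof cases
    case A
    define P where "P = enn2real p"
    define Q where "Q = enn2real q"
    have P: "0 < P" using A p by (simp add: P_def enn2real_positive_iff top.not_eq_extremum)
    have Q: "0 < Q" using A q by (simp add: Q_def enn2real_positive_iff top.not_eq_extremum)
    have PQ: "0 < P / Q" using P Q by simp
    have P1: "0 < 1 / P" using P by simp
    define wt :: "'a \<times> real \<Rightarrow> ennreal" where "wt z = ennreal (1 / snd z ^ (DIM('a) + 1))" for z
    have wt: "wt \<in> borel_measurable borel" unfolding wt_def by (rule measurable_compose[OF snd_borel]) measurable
    define I where "I k x = (\<integral>\<^sup>+ z. indicator (cone x) z * epow (G k z) Q * wt z \<partial>lebesgue)" for k x
    have inner: "(\<integral>\<^sup>+ z. indicator (cone x) z * epow (SUP k. G k z) Q * wt z \<partial>lebesgue) = (SUP k. I k x)" for x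
      unfolding I_def by (rule int_SUP_helper[OF inc G Q cone_borel wt])
    have Imeas: "I k \<in> borel_measurable borel" for k
    proof -
      have "(\<lambda>x. \<integral>\<^sup>+ z. indicator {p. snd p \<in> cone (fst p)} (x, z) * (epow (G k z) Q * wt z) \<partial>lebesgue)
            \<in> borel_measurable borel"
        by (rule slice_int_measurable[OF cone_joint_borel]) (use G wt in measurable)
      moreover have "(\<lambda>x. \<integral>\<^sup>+ z. indicator {p. snd p \<in> cone (fst p)} (x, z) * (epow (G k z) Q * wt z) \<partial>lebesgue)
          = I k"
        by (auto simp: I_def fun_eq_iff indicator_def intro!: nn_integral_cong)
      ultimately show ?thesis by simp
    qed
    have Iinc: "incseq (\<lambda>k x. epow (I k x) (P / Q))"
      unfolding incseq_Suc_iff le_fun_def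
    proof (intro allI epow_pos_mono[OF PQ])
      fix k x show "I k x \<le> I (Suc k) x"
        unfolding I_def by (intro nn_integral_mono mult_right_mono mult_left_mono epow_pos_mono[OF Q] incp) auto
    qed
    have outer: "(\<integral>\<^sup>+ x. epow (SUP k. I k x) (P / Q) \<partial>lebesgue) = (SUP k. \<integral>\<^sup>+ x. epow (I k x) (P / Q) \<partial>lebesgue)"
    proof -
      have "(\<integral>\<^sup>+ x. epow (SUP k. I k x) (P / Q) \<partial>lebesgue) = (\<integral>\<^sup>+ x. (SUP k. epow (I k x) (P / Q)) \<partial>lebesgue)"
        by (simp add: epow_SUP[OF PQ] image_comp)
      also have "\<dots> = (SUP k. \<integral>\<^sup>+ x. epow (I k x) (P / Q) \<partial>lebesgue)"
      proof (rule nn_integral_monotone_convergence_SUP[OF Iinc])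
        fix k
        have [measurable]: "I k \<in> borel_measurable lebesgue" using Imeas by (rule borel_to_lebesgue)
        show "(\<lambda>x. epow (I k x) (P / Q)) \<in> borel_measurable lebesgue" by measurable
      qed
      finally show ?thesis .
    qed
    have tn: "tent_norm p q H = epow (\<integral>\<^sup>+ x. epow (\<integral>\<^sup>+ z. indicator (cone x) z * epow (H z) Q * wt z \<partial>lebesgue) (P / Q) \<partial>lebesgue) (1 / P)" for H
      using A by (simp add: tent_norm_def P_def Q_def wt_def)
    have "tent_norm p q (\<lambda>z. SUP k. G k z) = epow (\<integral>\<^sup>+ x. epow (SUP k. I k x) (P / Q) \<partial>lebesgue) (1 / P)"
      unfolding tn inner ..
    also have "\<dots> = (SUP k. epow (\<integral>\<^sup>+ x. epow (I k x) (P / Q) \<partial>lebesgue) (1 / P))"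
      by (simp add: outer epow_SUP[OF P1] image_comp)
    also have "\<dots> = (SUP k. tent_norm p q (G k))"
      unfolding tn I_def ..
    finally show ?thesis .
  next
    case B
    define Q where "Q = enn2real q"
    have Q: "0 < Q" using B q by (simp add: Q_def enn2real_positive_iff top.not_eq_extremum)
    have Q1: "0 < 1 / Q" using Q by simp
    define wt :: "'a \<times> real \<Rightarrow> ennreal" where "wt z = ennreal (1 / snd z)" for z
    have wt: "wt \<in> borel_measurable borel" unfolding wt_def by (rule measurable_compose[OF snd_borel]) measurable
    define T where "T k c \<rho> = epow (emeasure lebesgue (ball c \<rho>)) (- 1 / Q)
           * epow (\<integral>\<^sup>+ z. indicator (tent c \<rho>) z * epow (G k z) Q * wt z \<partial>lebesgue) (1 / Q)" for k c \<rho>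
    have Tsup: "epow (emeasure lebesgue (ball c \<rho>)) (- 1 / Q)
           * epow (\<integral>\<^sup>+ z. indicator (tent c \<rho>) z * epow (SUP k. G k z) Q * wt z \<partial>lebesgue) (1 / Q)
         = (SUP k. T k c \<rho>)" for c \<rho>
      unfolding T_def int_SUP_helper[OF inc G Q tent_borel wt]
      by (simp add: epow_SUP[OF Q1] SUP_mult_left_ennreal image_comp)
    have tn: "tent_norm p q H = (SUP x. SUP c. SUP \<rho> \<in> {\<rho>. 0 < \<rho> \<and> x \<in> ball c \<rho>}.
           epow (emeasure lebesgue (ball c \<rho>)) (- 1 / Q)
           * epow (\<integral>\<^sup>+ z. indicator (tent c \<rho>) z * epow (H z) Q * wt z \<partial>lebesgue) (1 / Q))" for H
      using B by (simp add: tent_norm_def Q_def wt_def)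
    have "tent_norm p q (\<lambda>z. SUP k. G k z) =
        (SUP x. SUP c. SUP \<rho> \<in> {\<rho>. 0 < \<rho> \<and> x \<in> ball c \<rho>}. SUP k. T k c \<rho>)"
      unfolding tn Tsup ..
    also have "\<dots> = (SUP k. SUP x. SUP c. SUP \<rho> \<in> {\<rho>. 0 < \<rho> \<and> x \<in> ball c \<rho>}. T k c \<rho>)"
      by (rule antisym) (intro SUP_least; rule SUP_upper2[of _ UNIV]; auto intro: SUP_upper2)+
    also have "\<dots> = (SUP k. tent_norm p q (G k))"
      unfolding tn T_def ..
    finally show ?thesis .
  next
    case C
    define P where "P = enn2real p"
    have P: "0 < P" using C p by (simp add: P_def enn2real_positive_iff top.not_eq_extremum)
    have P1: "0 < 1 / P" using P by simp
    define S where "S k x = (SUP z\<in>cone x. G k z)" for k x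
    have Sx: "(SUP z\<in>cone x. SUP k. G k z) = (SUP k. S k x)" for x
      unfolding S_def by (rule SUP_commute)
    have Sinc: "incseq (\<lambda>k x. epow (S k x) P)"
      unfolding incseq_Suc_iff le_fun_def S_def
      by (intro allI epow_pos_mono[OF P] SUP_mono) (auto intro: incp)
    have outer: "(\<integral>\<^sup>+ x. epow (SUP k. S k x) P \<partial>lebesgue) = (SUP k. \<integral>\<^sup>+ x. epow (S k x) P \<partial>lebesgue)"
    proof -
      have "(\<integral>\<^sup>+ x. epow (SUP k. S k x) P \<partial>lebesgue) = (\<integral>\<^sup>+ x. (SUP k. epow (S k x) P) \<partial>lebesgue)"
        by (simp add: epow_SUP[OF P] image_comp)
      also have "\<dots> = (SUP k. \<integral>\<^sup>+ x. epow (S k x) P \<partial>lebesgue)"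
      proof (rule nn_integral_monotone_convergence_SUP[OF Sinc])
        fix k
        have [measurable]: "S k \<in> borel_measurable lebesgue"
          unfolding S_def by (rule borel_to_lebesgue) (rule cone_sup_measurable)
        show "(\<lambda>x. epow (S k x) P) \<in> borel_measurable lebesgue" by measurable
      qed
      finally show ?thesis .
    qed
    have "tent_norm p q (\<lambda>z. SUP k. G k z) = epow (\<integral>\<^sup>+ x. epow (SUP k. S k x) P \<partial>lebesgue) (1 / P)"
      using C by (simp add: tent_norm_def P_def[symmetric] Sx)
    also have "\<dots> = (SUP k. epow (\<integral>\<^sup>+ x. epow (S k x) P \<partial>lebesgue) (1 / P))"
      by (simp add: outer epow_SUP[OF P1] image_comp)
    also have "\<dots> = (SUP k. tent_norm p q (G k))"
      using C by (simp add: tent_norm_def P_def[symmetric] S_def)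
    finally show ?thesis .
  next
    case D
    then show ?thesis by (simp add: tent_norm_def esssup_on_SUP)
  qed
qed

lemma SUP_two: "a \<le> b \<Longrightarrow> (SUP j::nat. if j = 0 then a else b) = (b::ennreal)"
proof (rule antisym)
  assume "a \<le> b"
  then show "(SUP j::nat. if j = 0 then a else b) \<le> b" by (intro SUP_least) auto
  have "b = (\<lambda>j::nat. if j = 0 then a else b) 1" by simp
  also have "\<dots> \<le> (SUP j::nat. if j = 0 then a else b)" by (rule SUP_upper) simp
  finally show "b \<le> (SUP j::nat. if j = 0 then a else b)" .
qed

lemma SUP_two_fun: "g z \<le> h z \<Longrightarrow> (SUP j::nat. (if j = 0 then g else h) z) = (h z::ennreal)"
proof -
  assume le: "g z \<le> h z"
  have "(\<lambda>j::nat. (if j = 0 then g else h) z) = (\<lambda>j. if j = 0 then g z else h z)" by auto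
  then show ?thesis using SUP_two[OF le] by metis
qed

lemma tent_norm_mono:
  fixes G H :: "'a::euclidean_space \<times> real \<Rightarrow> ennreal"
  assumes "G \<le> H" "G \<in> borel_measurable borel" "H \<in> borel_measurable borel" "0 < p" "0 < q"
  shows "tent_norm p q G \<le> tent_norm p q H"
proof -
  let ?S = "\<lambda>j::nat. if j = 0 then G else H"
  have inc: "incseq ?S" using assms(1) by (auto simp: incseq_def)
  have "(\<lambda>z. SUP j. ?S j z) = H"
    using assms(1) by (auto simp: fun_eq_iff le_fun_def SUP_two_fun)
  moreover have "tent_norm p q (\<lambda>z. SUP j. ?S j z) = (SUP j. tent_norm p q (?S j))"
    using assms by (intro tent_norm_SUP inc) auto
  ultimately have "tent_norm p q H = (SUP j. tent_norm p q (?S j))" by simp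
  moreover have "tent_norm p q (?S 0) \<le> (SUP j. tent_norm p q (?S j))" by (rule SUP_upper) simp
  ultimately show ?thesis by simp
qed

lemma whitney_avg_mono:
  fixes g h :: "'a::euclidean_space \<times> real \<Rightarrow> ennreal"
  assumes a1: "0 < \<alpha>1" and a2: "0 < \<alpha>2" and r: "0 < r"
    and meas: "g \<in> borel_measurable lebesgue" "h \<in> borel_measurable lebesgue"
    and ae: "AE z in lebesgue. z \<in> upper_half \<longrightarrow> g z \<le> h z"
  shows "whitney_avg \<alpha>1 \<alpha>2 r g w \<le> whitney_avg \<alpha>1 \<alpha>2 r h w"
proof -
  let ?S = "\<lambda>j::nat. if j = 0 then g else h"
  have "whitney_avg \<alpha>1 \<alpha>2 r h w = (SUP j. whitney_avg \<alpha>1 \<alpha>2 r (?S j) w)"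
  proof (rule whitney_avg_SUP[OF a1 a2 r])
    show "?S k \<in> borel_measurable lebesgue" for k using meas by auto
    show "AE z in lebesgue. z \<in> upper_half \<longrightarrow> (\<forall>k. ?S k z \<le> ?S (Suc k) z) \<and> h z = (SUP k. ?S k z)"
      using ae by eventually_elim (auto simp: SUP_two_fun)
  qed
  moreover have "whitney_avg \<alpha>1 \<alpha>2 r (?S 0) w \<le> (SUP j. whitney_avg \<alpha>1 \<alpha>2 r (?S j) w)"
    by (rule SUP_upper) simp
  ultimately show ?thesis by simp
qed

theorem lemma4p2:
  fixes f :: "'a::euclidean_space \<times> real \<Rightarrow> complex"
    and fk :: "nat \<Rightarrow> 'a \<times> real \<Rightarrow> complex"
    and p q r :: ennreal and \<beta> \<alpha>1 \<alpha>2 :: real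
  assumes "0 < \<alpha>1" and "\<alpha>1 < 1 / \<alpha>2" and "1 / \<alpha>2 < 1"
    and "0 < p" and "0 < q" and "0 < r"
    and "\<forall>k. fk k \<in> tpr_space \<alpha>1 \<alpha>2 p q r \<beta>"
    and "(SUP k. tpr_norm \<alpha>1 \<alpha>2 p q r \<beta> (fk k)) < \<infinity>"
    and "f \<in> borel_measurable lebesgue"
    and "AE z in lebesgue. z \<in> upper_half \<longrightarrow>
           (\<forall>k. Im (fk k z) = 0 \<and> 0 \<le> Re (fk k z) \<and> Re (fk k z) \<le> Re (fk (Suc k) z))
           \<and> (\<lambda>k. fk k z) \<longlonglongrightarrow> f z"
  shows "f \<in> tpr_space \<alpha>1 \<alpha>2 p q r \<beta>
         \<and> (\<lambda>k. tpr_norm \<alpha>1 \<alpha>2 p q r \<beta> (fk k)) \<longlonglongrightarrow> tpr_norm \<alpha>1 \<alpha>2 p q r \<beta> f"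
proof -
  note a1 = assms(1) and a12 = assms(2) and a2' = assms(3)
  have a2: "0 < \<alpha>2"
  proof -
    have "0 < 1 / \<alpha>2" using a1 a12 by linarith
    then show ?thesis by simp
  qed
  define gk where "gk k = (\<lambda>(z, s). ennreal (cmod (fk k (z, s)) * s powr (- \<beta>)))" for k
  define g where "g = (\<lambda>(z, s). ennreal (cmod (f (z, s)) * s powr (- \<beta>)))"
  have gk_eq: "gk k = (\<lambda>w. ennreal (cmod (fk k w) * snd w powr (- \<beta>)))" for k
    by (auto simp: gk_def fun_eq_iff)
  have g_eq: "g = (\<lambda>w. ennreal (cmod (f w) * snd w powr (- \<beta>)))"
    by (auto simp: g_def fun_eq_iff)
  have sndl[measurable]: "(snd :: 'a \<times> real \<Rightarrow> real) \<in> borel_measurable lebesgue"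
    by (rule borel_to_lebesgue) (rule snd_borel)
  have fkm[measurable]: "fk k \<in> borel_measurable lebesgue" for k
    using assms(7) by (simp add: tpr_space_def)
  have fm[measurable]: "f \<in> borel_measurable lebesgue" using assms(9) .
  have gkm: "gk k \<in> borel_measurable lebesgue" for k unfolding gk_eq by measurable
  have gm: "g \<in> borel_measurable lebesgue" unfolding g_eq by measurable
  have ae: "AE z in lebesgue. z \<in> upper_half \<longrightarrow>
               (\<forall>k. gk k z \<le> gk (Suc k) z) \<and> g z = (SUP k. gk k z)"
    using assms(10)
  proof eventually_elim
    case (elim z)
    show ?case
    proof
      assume zu: "z \<in> upper_half"
      with elim have h: "\<And>k. Im (fk k z) = 0" "\<And>k. 0 \<le> Re (fk k z)" "\<And>k. Re (fk k z) \<le> Re (fk (Suc k) z)"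
        and lim: "(\<lambda>k. fk k z) \<longlonglongrightarrow> f z" by auto
      have cm: "cmod (fk k z) = Re (fk k z)" for k using h by (simp add: cmod_eq_Re)
      have pw: "0 \<le> snd z powr (- \<beta>)" by simp
      have mono: "gk k z \<le> gk (Suc k) z" for k
        unfolding gk_eq using h(3)[of k] pw by (auto simp: cm intro!: ennreal_leI mult_right_mono)
      have inc: "incseq (\<lambda>k. gk k z)" using mono by (simp add: incseq_Suc_iff)
      have "(\<lambda>k. gk k z) \<longlonglongrightarrow> g z"
        unfolding gk_eq g_eq
        by (intro tendsto_ennrealI tendsto_mult tendsto_const tendsto_norm lim)
      moreover have "(\<lambda>k. gk k z) \<longlonglongrightarrow> (SUP k. gk k z)" using inc by (rule LIMSEQ_SUP)
      ultimately have "g z = (SUP k. gk k z)" by (rule LIMSEQ_unique)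
      with mono show "(\<forall>k. gk k z \<le> gk (Suc k) z) \<and> g z = (SUP k. gk k z)" by blast
    qed
  qed
  define Gk where "Gk k = whitney_avg \<alpha>1 \<alpha>2 r (gk k)" for k
  define G where "G = whitney_avg \<alpha>1 \<alpha>2 r g"
  have GSUP: "G = (\<lambda>w. SUP k. Gk k w)"
    unfolding G_def Gk_def fun_eq_iff
    by (intro allI whitney_avg_SUP[OF a1 a2 assms(6) gkm ae])
  have Gkm: "Gk k \<in> borel_measurable borel" for k
    unfolding Gk_def by (rule whitney_avg_measurable[OF gkm])
  have Gm: "G \<in> borel_measurable borel"
    unfolding G_def by (rule whitney_avg_measurable[OF gm])
  have Ginc: "incseq Gk"
    unfolding incseq_Suc_iff le_fun_def Gk_def
  proof (intro allI whitney_avg_mono[OF a1 a2 assms(6) gkm gkm])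
    fix k show "AE z in lebesgue. z \<in> upper_half \<longrightarrow> gk k z \<le> gk (Suc k) z"
      using ae by eventually_elim blast
  qed
  have nk: "tpr_norm \<alpha>1 \<alpha>2 p q r \<beta> (fk k) = tent_norm p q (Gk k)" for k
    by (simp add: tpr_norm_def Gk_def gk_def)
  have nf: "tpr_norm \<alpha>1 \<alpha>2 p q r \<beta> f = tent_norm p q G"
    by (simp add: tpr_norm_def G_def g_def)
  have eq: "tpr_norm \<alpha>1 \<alpha>2 p q r \<beta> f = (SUP k. tpr_norm \<alpha>1 \<alpha>2 p q r \<beta> (fk k))"
    unfolding nf nk GSUP by (rule tent_norm_SUP[OF Ginc Gkm assms(4,5)])
  have ninc: "incseq (\<lambda>k. tpr_norm \<alpha>1 \<alpha>2 p q r \<beta> (fk k))"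
    unfolding incseq_Suc_iff nk
    using Ginc Gkm assms(4,5) by (auto simp: incseq_Suc_iff intro!: tent_norm_mono)
  show ?thesis
  proof
    show "f \<in> tpr_space \<alpha>1 \<alpha>2 p q r \<beta>"
      using assms(8,9) eq by (simp add: tpr_space_def)
    show "(\<lambda>k. tpr_norm \<alpha>1 \<alpha>2 p q r \<beta> (fk k)) \<longlonglongrightarrow> tpr_norm \<alpha>1 \<alpha>2 p q r \<beta> f"
      unfolding eq using ninc by (rule LIMSEQ_SUP)
  qed
qed

end
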